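(* Let $m>n$ be positive integers, $\lambda\in X$, $\Lambda=x(\lambda)$, and $\alpha=\epsilon_i-\delta_j$ with $i\in[n]$, $j\in[m]$. Then: (a) if $\lambda\in X_\alpha$ then $\Lambda\in\Pi_\alpha$; (b) if $\lambda\in X_{-\alpha}$ then $\Lambda\in\Pi_{-\alpha}$; (c) if $\lambda\in X_{\pm\alpha}$ then $x(t_{\pm\alpha}(\lambda))=\tau_{\pm\alpha}(\Lambda)$.
   Context: $X$ is the set of partitions $\lambda=(\lambda_1\ge\dots\ge\lambda_n\ge0)$ with $\lambda_1\le m$, drawn in an $n\times m$ rectangle with rows $\epsilon_1,\dots,\epsilon_n$ top to bottom and columns $\delta_1,\dots,\delta_m$; the diagram consists of boxes $\epsilon_i-\delta_j$ with $j\le\lambda_{n+1-i}$; $\lambda'_j=\#\{i:\lambda_i\ge j\}$. $X_\alpha$ (resp. $X_{-\alpha}$) is the set of $\lambda$ for which box $\alpha$ is an outer (resp. inner) corner; $t_\alpha$ adds, $t_{-\alpha}$ removes this box. Elements of $\mathbb Z^{n|m}$ are $(a_1,\dots,a_n|b_1,\dots,b_m)$; $x(\lambda)$ has $a_i=m(n-i)+n\lambda_{n+1-i}$, $b_j=n(j-1)+m\lambda'_j$. $\Pi_\alpha=\{a_i=b_j\}$, $\Pi_{-\alpha}=\{a_i-b_j=n-m\}$, $\tau_\alpha(\Lambda)$ adds $n$ to $a_i$ and $m$ to $b_j$, and $\tau_{-\alpha}=\tau_\alpha^{-1}$ subtracts them. *)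

theory Defs
  imports Main
begin

definition Xset :: "nat \<Rightarrow> nat \<Rightarrow> (nat \<Rightarrow> nat) set" where
  "Xset n m = {lam. (\<forall>k. (k < 1 \<or> k > n) \<longrightarrow> lam k = 0)
                  \<and> (\<forall>k\<in>{1..n}. lam k \<le> m)
                  \<and> (\<forall>k l. 1 \<le> k \<and> k \<le> l \<and> l \<le> n \<longrightarrow> lam l \<le> lam k)}"

text \<open>Young diagram: box (i,j) stands for epsilon_i - delta_j; it lies in the diagram iff
  j <= lam (n+1-i).\<close>
definition diagram :: "nat \<Rightarrow> nat \<Rightarrow> (nat \<Rightarrow> nat) \<Rightarrow> (nat \<times> nat) set" where
  "diagram n m lam = {(i, j). 1 \<le> i \<and> i \<le> n \<and> 1 \<le> j \<and> j \<le> m \<and> j \<le> lam (n + 1 - i)}"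

definition Xplus :: "nat \<Rightarrow> nat \<Rightarrow> nat \<Rightarrow> nat \<Rightarrow> (nat \<Rightarrow> nat) set" where
  "Xplus n m i j = {lam \<in> Xset n m. (i, j) \<notin> diagram n m lam \<and>
      (\<exists>mu \<in> Xset n m. diagram n m mu = diagram n m lam \<union> {(i, j)})}"

definition Xminus :: "nat \<Rightarrow> nat \<Rightarrow> nat \<Rightarrow> nat \<Rightarrow> (nat \<Rightarrow> nat) set" where
  "Xminus n m i j = {lam \<in> Xset n m. (i, j) \<in> diagram n m lam \<and>
      (\<exists>mu \<in> Xset n m. diagram n m mu = diagram n m lam - {(i, j)})}"

text \<open>t_alpha adds the box (i,j) (row i corresponds to the part lam (n+1-i)),
  t_{-alpha} removes it.\<close>
definition tplus :: "nat \<Rightarrow> nat \<Rightarrow> nat \<Rightarrow> (nat \<Rightarrow> nat) \<Rightarrow> (nat \<Rightarrow> nat)" where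
  "tplus n i j lam = lam(n + 1 - i := lam (n + 1 - i) + 1)"

definition tminus :: "nat \<Rightarrow> nat \<Rightarrow> nat \<Rightarrow> (nat \<Rightarrow> nat) \<Rightarrow> (nat \<Rightarrow> nat)" where
  "tminus n i j lam = lam(n + 1 - i := lam (n + 1 - i) - 1)"

definition conj_part :: "nat \<Rightarrow> (nat \<Rightarrow> nat) \<Rightarrow> nat \<Rightarrow> nat" where
  "conj_part n lam j = card {k \<in> {1..n}. lam k \<ge> j}"

text \<open>Elements of Z^{n|m} as pairs (a, b) of integer sequences, a indexed by 1..n and
  b indexed by 1..m (entries outside these ranges are 0 for x(lam)).\<close>
type_synonym zvec = "(nat \<Rightarrow> int) \<times> (nat \<Rightarrow> int)"

definition xmap :: "nat \<Rightarrow> nat \<Rightarrow> (nat \<Rightarrow> nat) \<Rightarrow> zvec" where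
  "xmap n m lam =
     ((\<lambda>i. if 1 \<le> i \<and> i \<le> n then int m * (int n - int i) + int n * int (lam (n + 1 - i)) else 0),
      (\<lambda>j. if 1 \<le> j \<and> j \<le> m then int n * (int j - 1) + int m * int (conj_part n lam j) else 0))"

definition Piplus :: "nat \<Rightarrow> nat \<Rightarrow> zvec set" where
  "Piplus i j = {L. fst L i = snd L j}"

definition Piminus :: "nat \<Rightarrow> nat \<Rightarrow> nat \<Rightarrow> nat \<Rightarrow> zvec set" where
  "Piminus n m i j = {L. fst L i - snd L j = int n - int m}"

definition tauplus :: "nat \<Rightarrow> nat \<Rightarrow> nat \<Rightarrow> nat \<Rightarrow> zvec \<Rightarrow> zvec" where
  "tauplus n m i j L = ((fst L)(i := fst L i + int n), (snd L)(j := snd L j + int m))"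

definition tauminus :: "nat \<Rightarrow> nat \<Rightarrow> nat \<Rightarrow> nat \<Rightarrow> zvec \<Rightarrow> zvec" where
  "tauminus n m i j L = ((fst L)(i := fst L i - int n), (snd L)(j := snd L j - int m))"

end

theory Submission
  imports Defs
begin

lemma diag_row:
  assumes "lam \<in> Xset n m" "1 \<le> k" "k \<le> n"
  shows "{j. (n + 1 - k, j) \<in> diagram n m lam} = {1..lam k}"
proof -
  have "lam k \<le> m" using assms unfolding Xset_def by auto
  moreover have "n + 1 - (n + 1 - k) = k" using assms by simp
  ultimately show ?thesis using assms unfolding diagram_def by auto
qed

lemma Xset_out: "lam \<in> Xset n m \<Longrightarrow> k < 1 \<or> k > n \<Longrightarrow> lam k = 0"
  unfolding Xset_def by auto

lemma interval_eq: "{1..(a::nat)} = {1..b} \<Longrightarrow> a = b"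
  by (metis card_atLeastAtMost diff_Suc_1)

lemma plus_struct:
  assumes lam: "lam \<in> Xset n m" and mu: "mu \<in> Xset n m"
    and i: "1 \<le> i" "i \<le> n" and nd: "(i, j) \<notin> diagram n m lam"
    and d: "diagram n m mu = diagram n m lam \<union> {(i, j)}"
  shows "mu = tplus n i j lam" "lam (n + 1 - i) + 1 = j"
proof -
  define r where "r = n + 1 - i"
  have r: "1 \<le> r" "r \<le> n" "n + 1 - r = i" using i r_def by auto
  have rows: "{1..mu k} = {1..lam k} \<union> (if k = r then {j} else {})" if "1 \<le> k" "k \<le> n" for k
  proof -
    have "{1..mu k} = {jj. (n + 1 - k, jj) \<in> diagram n m mu}" using diag_row[OF mu that] by simp
    also have "\<dots> = {jj. (n + 1 - k, jj) \<in> diagram n m lam} \<union> (if k = r then {j} else {})"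

      proof -
        have e: "(n + 1 - k = i) = (k = r)" using that r_def i by auto
        show ?thesis unfolding d using e by auto
      qed
    also have "\<dots> = {1..lam k} \<union> (if k = r then {j} else {})" using diag_row[OF lam that] by simp
    finally show ?thesis .
  qed
  have jn: "j \<notin> {1..lam r}" using nd diag_row[OF lam r(1,2)] r(3) by auto
  have rr: "{1..mu r} = insert j {1..lam r}" using rows[OF r(1,2)] by auto
  hence "card {1..mu r} = Suc (card {1..lam r})" using jn by simp
  hence mur: "mu r = lam r + 1" by simp
  have "j \<in> {1..mu r}" using rr by auto
  hence jr: "j = lam r + 1" using jn mur by auto
  show "lam (n + 1 - i) + 1 = j" using jr r_def by simp
  show "mu = tplus n i j lam"
  proof
    fix k
    show "mu k = tplus n i j lam k"
    proof (cases "1 \<le> k \<and> k \<le> n")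
      case True
      then show ?thesis
      proof (cases "k = r")
        case True then show ?thesis using mur by (simp add: tplus_def r_def)
      next
        case False
        then have "{1..mu k} = {1..lam k}" using rows[of k] \<open>1 \<le> k \<and> k \<le> n\<close> by simp
        then have "mu k = lam k" by (rule interval_eq)
        then show ?thesis using False by (simp add: tplus_def r_def)
      qed
    next
      case False
      then have "k \<noteq> r" using r by auto
      have kk: "k < 1 \<or> k > n" using False by auto
      have lk: "lam k = 0" "mu k = 0" using Xset_out[OF lam kk] Xset_out[OF mu kk] by auto
      then show ?thesis using \<open>k \<noteq> r\<close> unfolding tplus_def r_def by auto
    qed
  qed
qed

lemma minus_struct:
  assumes lam: "lam \<in> Xset n m" and mu: "mu \<in> Xset n m"
    and i: "1 \<le> i" "i \<le> n" and nd: "(i, j) \<in> diagram n m lam"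
    and d: "diagram n m mu = diagram n m lam - {(i, j)}"
  shows "mu = tminus n i j lam" "lam (n + 1 - i) = j"
proof -
  define r where "r = n + 1 - i"
  have r: "1 \<le> r" "r \<le> n" "n + 1 - r = i" using i r_def by auto
  have rows: "{1..mu k} = {1..lam k} - (if k = r then {j} else {})" if "1 \<le> k" "k \<le> n" for k
  proof -
    have "{1..mu k} = {jj. (n + 1 - k, jj) \<in> diagram n m mu}" using diag_row[OF mu that] by simp
    also have "\<dots> = {jj. (n + 1 - k, jj) \<in> diagram n m lam} - (if k = r then {j} else {})"

      proof -
        have e: "(n + 1 - k = i) = (k = r)" using that r_def i by auto
        show ?thesis unfolding d using e by auto
      qed
    also have "\<dots> = {1..lam k} - (if k = r then {j} else {})" using diag_row[OF lam that] by simp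
    finally show ?thesis .
  qed
  have jn: "j \<in> {1..lam r}" using nd diag_row[OF lam r(1,2)] r(3) by auto
  have rr: "{1..mu r} = {1..lam r} - {j}" using rows[OF r(1,2)] by auto
  hence "card {1..mu r} = card {1..lam r} - 1" using jn by simp
  hence mur: "mu r = lam r - 1" by simp
  have "lam r \<notin> {1..mu r}" using mur by auto
  hence nn: "lam r \<notin> {1..lam r} - {j}" using rr by metis
  have "lam r \<in> {1..lam r}" using jn by auto
  hence jr: "j = lam r" using nn by blast
  show "lam (n + 1 - i) = j" using jr r_def by simp
  show "mu = tminus n i j lam"
  proof
    fix k
    show "mu k = tminus n i j lam k"
    proof (cases "1 \<le> k \<and> k \<le> n")
      case True
      then show ?thesis
      proof (cases "k = r")
        case True then show ?thesis using mur by (simp add: tminus_def r_def)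
      next
        case False
        then have "{1..mu k} = {1..lam k}" using rows[of k] \<open>1 \<le> k \<and> k \<le> n\<close> by simp
        then have "mu k = lam k" by (rule interval_eq)
        then show ?thesis using False by (simp add: tminus_def r_def)
      qed
    next
      case False
      then have "k \<noteq> r" using r by auto
      have kk: "k < 1 \<or> k > n" using False by auto
      have lk: "lam k = 0" "mu k = 0" using Xset_out[OF lam kk] Xset_out[OF mu kk] by auto
      then show ?thesis using \<open>k \<noteq> r\<close> unfolding tminus_def r_def by auto
    qed
  qed
qed

lemma conj_count:
  assumes "\<And>k. 1 \<le> k \<Longrightarrow> k \<le> n \<Longrightarrow> (lam k \<ge> j \<longleftrightarrow> k < s)" "s \<le> n + 1" "1 \<le> s"
  shows "conj_part n lam j = s - 1"
proof -
  have "{k \<in> {1..n}. lam k \<ge> j} = {1..s-1}" using assms by auto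
  thus ?thesis unfolding conj_part_def by simp
qed

lemma conj_plus:
  assumes "1 \<le> r" "r \<le> n"
  shows "conj_part n (lam(r := lam r + 1)) jj = conj_part n lam jj + (if jj = lam r + 1 then 1 else 0)"
proof -
  have fin: "finite {k \<in> {1..n}. lam k \<ge> jj}" by simp
  show ?thesis
  proof (cases "jj = lam r + 1")
    case True
    then have "{k \<in> {1..n}. (lam(r := lam r + 1)) k \<ge> jj} = insert r {k \<in> {1..n}. lam k \<ge> jj}"
      using assms by auto
    moreover have "r \<notin> {k \<in> {1..n}. lam k \<ge> jj}" using \<open>jj = lam r + 1\<close> by auto
    ultimately show ?thesis unfolding conj_part_def using True fin by simp
  next
    case False
    then have "{k \<in> {1..n}. (lam(r := lam r + 1)) k \<ge> jj} = {k \<in> {1..n}. lam k \<ge> jj}"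
      using assms by auto
    then show ?thesis unfolding conj_part_def using False by simp
  qed
qed


lemma Xset_mono: "lam \<in> Xset n m \<Longrightarrow> 1 \<le> k \<Longrightarrow> k \<le> l \<Longrightarrow> l \<le> n \<Longrightarrow> lam l \<le> lam k"
  unfolding Xset_def by blast

theorem lemma4p3:
  fixes n m i j :: nat and lam :: "nat \<Rightarrow> nat"
  assumes "0 < n" and "n < m"
    and "lam \<in> Xset n m"
    and "1 \<le> i" and "i \<le> n" and "1 \<le> j" and "j \<le> m"
  shows "(lam \<in> Xplus n m i j \<longrightarrow> xmap n m lam \<in> Piplus i j)
       \<and> (lam \<in> Xminus n m i j \<longrightarrow> xmap n m lam \<in> Piminus n m i j)
       \<and> (lam \<in> Xplus n m i j \<longrightarrow> xmap n m (tplus n i j lam) = tauplus n m i j (xmap n m lam))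
       \<and> (lam \<in> Xminus n m i j \<longrightarrow> xmap n m (tminus n i j lam) = tauminus n m i j (xmap n m lam))"
proof -
  define r where "r = n + 1 - i"
  have r: "1 \<le> r" "r \<le> n" "n + 1 - r = i" using assms r_def by auto
  have lam: "lam \<in> Xset n m" by fact
  have P: "xmap n m lam \<in> Piplus i j \<and> xmap n m (tplus n i j lam) = tauplus n m i j (xmap n m lam)"
    if lx: "lam \<in> Xplus n m i j"
  proof -
    obtain mu where mu: "mu \<in> Xset n m" and nd: "(i, j) \<notin> diagram n m lam"
      and d: "diagram n m mu = diagram n m lam \<union> {(i, j)}"
      using lx unfolding Xplus_def by blast
    have mut: "mu = tplus n i j lam" and lr: "lam r + 1 = j"
      using plus_struct[OF lam mu assms(4,5) nd d] r_def by auto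
    have mueq: "mu = lam(r := lam r + 1)" using mut by (simp add: tplus_def r_def)
    have cj: "conj_part n lam j = r - 1"
    proof (rule conj_count)
      fix k assume k: "1 \<le> k" "k \<le> n"
      show "j \<le> lam k \<longleftrightarrow> k < r"
      proof
        assume "j \<le> lam k"
        show "k < r"
        proof (rule ccontr)
          assume "\<not> k < r"
          then have "lam k \<le> lam r" using Xset_mono[OF lam r(1) _ k(2)] by simp
          then show False using \<open>j \<le> lam k\<close> lr by simp
        qed
      next
        assume "k < r"
        then have "mu r \<le> mu k" using Xset_mono[OF mu k(1) _ r(2)] by simp
        then show "j \<le> lam k" using mueq lr \<open>k < r\<close> by (auto split: if_splits)
      qed
    qed (use r in auto)
    have A: "xmap n m lam \<in> Piplus i j"
      unfolding Piplus_def xmap_def using assms cj lr r by (auto simp: r_def algebra_simps)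
    have B: "xmap n m (tplus n i j lam) = tauplus n m i j (xmap n m lam)"
    proof -
      have f: "fst (xmap n m (tplus n i j lam)) = fst (tauplus n m i j (xmap n m lam))"
      proof
        fix k
        show "fst (xmap n m (tplus n i j lam)) k = fst (tauplus n m i j (xmap n m lam)) k"
        proof (cases "1 \<le> k \<and> k \<le> n")
          case True
          then have "(n + 1 - k = r) = (k = i)" using r r_def by auto
          then show ?thesis using True unfolding xmap_def tauplus_def tplus_def
            by (auto simp: r_def algebra_simps)
        next
          case False
          then have "k \<noteq> i" using assms by auto
          then show ?thesis using False unfolding xmap_def tauplus_def tplus_def by auto
        qed
      qed
      have g: "snd (xmap n m (tplus n i j lam)) = snd (tauplus n m i j (xmap n m lam))"
      proof
        fix jj
        have c: "conj_part n (tplus n i j lam) jj = conj_part n lam jj + (if jj = j then 1 else 0)"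
          using conj_plus[OF r(1,2), of lam jj] lr mueq mut by simp
        show "snd (xmap n m (tplus n i j lam)) jj = snd (tauplus n m i j (xmap n m lam)) jj"
          using c assms unfolding xmap_def tauplus_def by (auto simp: algebra_simps)
      qed
      show ?thesis using f g by (simp add: prod_eq_iff)
    qed
    show ?thesis using A B by simp
  qed
  have M: "xmap n m lam \<in> Piminus n m i j \<and> xmap n m (tminus n i j lam) = tauminus n m i j (xmap n m lam)"
    if lx: "lam \<in> Xminus n m i j"
  proof -
    obtain mu where mu: "mu \<in> Xset n m" and nd: "(i, j) \<in> diagram n m lam"
      and d: "diagram n m mu = diagram n m lam - {(i, j)}"
      using lx unfolding Xminus_def by blast
    have mut: "mu = tminus n i j lam" and lr: "lam r = j"
      using minus_struct[OF lam mu assms(4,5) nd d] r_def by auto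
    have mueq: "mu = lam(r := j - 1)" using mut lr by (simp add: tminus_def r_def)
    have lameq: "lam = mu(r := mu r + 1)" using mueq lr assms(6) by auto
    have cj: "conj_part n lam j = (r + 1) - 1"
    proof (rule conj_count)
      fix k assume k: "1 \<le> k" "k \<le> n"
      show "j \<le> lam k \<longleftrightarrow> k < r + 1"
      proof
        assume "j \<le> lam k"
        show "k < r + 1"
        proof (rule ccontr)
          assume "\<not> k < r + 1"
          then have "mu k \<le> mu r" using Xset_mono[OF mu r(1) _ k(2)] by simp
          then show False using \<open>j \<le> lam k\<close> mueq \<open>\<not> k < r + 1\<close> assms(6) by auto
        qed
      next
        assume "k < r + 1"
        then have "lam r \<le> lam k" using Xset_mono[OF lam k(1) _ r(2)] by simp
        then show "j \<le> lam k" using lr by simp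
      qed
    qed (use r in auto)
    have A: "xmap n m lam \<in> Piminus n m i j"
      unfolding Piminus_def xmap_def using assms cj lr r by (auto simp: r_def algebra_simps)
    have B: "xmap n m (tminus n i j lam) = tauminus n m i j (xmap n m lam)"
    proof -
      have f: "fst (xmap n m (tminus n i j lam)) = fst (tauminus n m i j (xmap n m lam))"
      proof
        fix k
        show "fst (xmap n m (tminus n i j lam)) k = fst (tauminus n m i j (xmap n m lam)) k"
        proof (cases "1 \<le> k \<and> k \<le> n")
          case True
          then have "(n + 1 - k = r) = (k = i)" using r r_def by auto
          then show ?thesis using True lr assms(6) unfolding xmap_def tauminus_def tminus_def
            by (auto simp: r_def algebra_simps of_nat_diff)
        next
          case False
          then have "k \<noteq> i" using assms by auto
          then show ?thesis using False unfolding xmap_def tauminus_def tminus_def by auto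
        qed
      qed
      have g: "snd (xmap n m (tminus n i j lam)) = snd (tauminus n m i j (xmap n m lam))"
      proof
        fix jj
        have c: "conj_part n lam jj = conj_part n (tminus n i j lam) jj + (if jj = j then 1 else 0)"
          using conj_plus[OF r(1,2), of mu jj] lr mueq mut lameq assms(6) by (metis Suc_eq_plus1 Suc_pred' fun_upd_same less_eq_Suc_le)
        show "snd (xmap n m (tminus n i j lam)) jj = snd (tauminus n m i j (xmap n m lam)) jj"
          using c assms unfolding xmap_def tauminus_def by (auto simp: algebra_simps)
      qed
      show ?thesis using f g by (simp add: prod_eq_iff)
    qed
    show ?thesis using A B by simp
  qed
  show ?thesis using P M by blast
qed

end
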